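(* Let $a,b$ be nonnegative integers, let $G$ be a group and let $N\trianglelefteq G$ be a normal subgroup, with natural projection $\rho:G\to G/N$. Then: (i) If $S$ is a sub-$(a,b)$-valent Cayley set of $G$, then $\rho(S)\setminus\{1\}$ is a sub-$(a,b)$-valent Cayley set of $G/N$. (ii) If $G$ is a sub-$(a,b)$-valent group, then $G/N$ is also a sub-$(a,b)$-valent group.
   Context: An involution is an element of order $2$. A subset $S$ of a group $G$ is a Cayley set of $G$ if $1\notin S$, $S$ is inverse-closed ($S^{-1}=S$), and $S$ generates $G$. On pairs of nonnegative integers define $(a',b')\preccurlyeq(a,b)$ if and only if $b'\le b$ and $a'\le a+(b-b')/2$. A Cayley set $S$ is $(a,b)$-valent if it consists of exactly $a$ involutions and $b$ non-involutions; it is sub-$(a,b)$-valent if it consists of $a'$ involutions and $b'$ non-involutions with $(a',b')\preccurlyeq(a,b)$. A group is sub-$(a,b)$-valent if it has a sub-$(a,b)$-valent Cayley set. *)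

theory Defs
  imports "HOL-Algebra.Algebra"
begin

definition involution :: "('a, 'b) monoid_scheme \<Rightarrow> 'a \<Rightarrow> bool" where
  "involution G x \<longleftrightarrow> x \<in> carrier G \<and> group.ord G x = 2"

definition cayley_set :: "('a, 'b) monoid_scheme \<Rightarrow> 'a set \<Rightarrow> bool" where
  "cayley_set G S \<longleftrightarrow> S \<subseteq> carrier G \<and> \<one>\<^bsub>G\<^esub> \<notin> S \<and>
     (\<forall>s\<in>S. inv\<^bsub>G\<^esub> s \<in> S) \<and> generate G S = carrier G"

definition val_le :: "nat \<times> nat \<Rightarrow> nat \<times> nat \<Rightarrow> bool" where
  "val_le p q \<longleftrightarrow> snd p \<le> snd q \<and>
     real (fst p) \<le> real (fst q) + (real (snd q) - real (snd p)) / 2"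

definition sub_valent_cayley_set :: "('a, 'b) monoid_scheme \<Rightarrow> nat \<Rightarrow> nat \<Rightarrow> 'a set \<Rightarrow> bool" where
  "sub_valent_cayley_set G a b S \<longleftrightarrow> cayley_set G S \<and> finite S \<and>
     val_le (card {s\<in>S. involution G s}, card {s\<in>S. \<not> involution G s}) (a, b)"

definition sub_valent_group :: "('a, 'b) monoid_scheme \<Rightarrow> nat \<Rightarrow> nat \<Rightarrow> bool" where
  "sub_valent_group G a b \<longleftrightarrow> (\<exists>S. sub_valent_cayley_set G a b S)"

end

theory Submission
  imports Defs
begin

lemma fiber_bound:
  assumes "finite XX" and "\<And>x. x \<in> XX \<Longrightarrow> g x \<in> XX \<and> g x \<noteq> x \<and> f (g x) = f x"
  shows "2 * card (f ` XX) \<le> card XX"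
proof -
  have eq: "XX = (\<Union>t\<in>f ` XX. {x\<in>XX. f x = t})" by auto
  have "card XX = (\<Sum>t\<in>f ` XX. card {x\<in>XX. f x = t})"
    by (subst eq, rule card_UN_disjoint) (use assms(1) in auto)
  moreover have "(\<Sum>t\<in>f ` XX. (2::nat)) \<le> (\<Sum>t\<in>f ` XX. card {x\<in>XX. f x = t})"
  proof (rule sum_mono)
    fix t assume "t \<in> f ` XX"
    then obtain x where x: "x \<in> XX" "f x = t" by auto
    have "{x, g x} \<subseteq> {x\<in>XX. f x = t}" using assms(2)[OF x(1)] x by auto
    moreover have "card {x, g x} = 2" using assms(2)[OF x(1)] by auto
    ultimately show "2 \<le> card {x\<in>XX. f x = t}"
      by (metis (no_types, lifting) assms(1) card_mono finite_subset mem_Collect_eq subsetI)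
  qed
  ultimately show ?thesis by simp
qed

lemma involution_iff:
  fixes G (structure)
  assumes "group G" "x \<in> carrier G"
  shows "involution G x \<longleftrightarrow> x \<noteq> \<one>\<^bsub>G\<^esub> \<and> x \<otimes>\<^bsub>G\<^esub> x = \<one>\<^bsub>G\<^esub>"
proof -
  interpret group G by fact
  have sq: "x \<otimes> x = x [^] (2::nat)" using assms(2) by (simp add: numeral_2_eq_2)
  show ?thesis
  proof
    assume "involution G x"
    then have o: "ord x = 2" by (simp add: involution_def)
    then have "x [^] (2::nat) = \<one>" using pow_eq_id assms(2) by auto
    moreover have "x \<noteq> \<one>" using o ord_eq_1 assms(2) by auto
    ultimately show "x \<noteq> \<one> \<and> x \<otimes> x = \<one>" using sq by simp
  next
    assume a: "x \<noteq> \<one> \<and> x \<otimes> x = \<one>"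
    then have "ord x dvd 2" using pow_eq_id assms(2) sq by auto
    moreover have "ord x \<noteq> 1" using a ord_eq_1 assms(2) by auto
    moreover have "ord x \<noteq> 0" using \<open>ord x dvd 2\<close> by (metis dvd_0_left_iff zero_neq_numeral)
    moreover have "ord x \<le> 2" using \<open>ord x dvd 2\<close> by (rule dvd_imp_le) simp
    ultimately have "ord x = 2" by linarith
    then show "involution G x" using assms(2) by (simp add: involution_def)
  qed
qed

lemma hom_image_sub_valent:
  assumes hG: "group_hom G H h" and surj: "h ` carrier G = carrier H"
    and S: "sub_valent_cayley_set G a b S"
  shows "sub_valent_cayley_set H a b (h ` S - {\<one>\<^bsub>H\<^esub>})"
proof -
  interpret group_hom G H h by fact
  define T where "T = h ` S - {\<one>\<^bsub>H\<^esub>}"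
  have SG: "S \<subseteq> carrier G" and one: "\<one>\<^bsub>G\<^esub> \<notin> S" and invS: "\<forall>s\<in>S. inv\<^bsub>G\<^esub> s \<in> S"
    and gen: "generate G S = carrier G" and fin: "finite S"
    and vl: "val_le (card {s\<in>S. involution G s}, card {s\<in>S. \<not> involution G s}) (a, b)"
    using S by (auto simp: sub_valent_cayley_set_def cayley_set_def)
  have TH: "T \<subseteq> carrier H" using SG T_def by auto
  have invT: "\<forall>t\<in>T. inv\<^bsub>H\<^esub> t \<in> T"
  proof
    fix t assume "t \<in> T"
    then obtain s where s: "s \<in> S" "t = h s" "t \<noteq> \<one>\<^bsub>H\<^esub>" by (auto simp: T_def)
    have "inv\<^bsub>H\<^esub> t = h (inv\<^bsub>G\<^esub> s)" using s SG by auto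
    moreover have "inv\<^bsub>H\<^esub> t \<noteq> \<one>\<^bsub>H\<^esub>" using s SG
      by (metis H.inv_eq_1_iff hom_closed subsetD)
    ultimately show "inv\<^bsub>H\<^esub> t \<in> T" using s invS by (auto simp: T_def)
  qed
  have genT: "generate H T = carrier H"
  proof -
    have "generate H (h ` S) = carrier H" using generate_img[OF SG] gen surj by simp
    moreover have "generate H (h ` S) \<subseteq> generate H T"
    proof (rule H.generate_subgroup_incl)
      show "h ` S \<subseteq> generate H T"
      proof
        fix y assume "y \<in> h ` S"
        show "y \<in> generate H T"
        proof (cases "y = \<one>\<^bsub>H\<^esub>")
          case True then show ?thesis by (simp add: generate.one)
        next
          case False then show ?thesis using \<open>y \<in> h ` S\<close> by (auto simp: T_def intro: generate.incl)
        qed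
      qed
      show "subgroup (generate H T) H" using H.generate_is_subgroup TH by blast
    qed
    moreover have "generate H T \<subseteq> carrier H" using H.generate_is_subgroup[OF TH] subgroup.subset by blast
    ultimately show ?thesis by blast
  qed
  have cay: "cayley_set H T" using TH invT genT by (auto simp: cayley_set_def T_def)
  have finT: "finite T" using fin by (simp add: T_def)
  define SI where "SI = {s\<in>S. involution G s}"
  define SN where "SN = {s\<in>S. \<not> involution G s}"
  define TI where "TI = {s\<in>T. involution H s}"
  define TN where "TN = {s\<in>T. \<not> involution H s}"
  define XX where "XX = {s\<in>SN. involution H (h s)}"
  define YY where "YY = {s\<in>SN. \<not> involution H (h s) \<and> h s \<noteq> \<one>\<^bsub>H\<^esub>}"
  have gG: "group G" and gH: "group H" by (simp_all add: G.group_axioms H.group_axioms)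
  have SIimg: "s \<in> SI \<Longrightarrow> h s = \<one>\<^bsub>H\<^esub> \<or> involution H (h s)" for s
  proof -
    assume "s \<in> SI"
    then have s: "s \<in> carrier G" "s \<otimes>\<^bsub>G\<^esub> s = \<one>\<^bsub>G\<^esub>"
      using SG involution_iff[OF gG] by (auto simp: SI_def)
    then have "h s \<otimes>\<^bsub>H\<^esub> h s = \<one>\<^bsub>H\<^esub>" by (metis hom_mult hom_one)
    then show ?thesis using involution_iff[OF gH] s by auto
  qed
  have TNsub: "TN \<subseteq> h ` YY"
  proof
    fix t assume "t \<in> TN"
    then obtain s where s: "s \<in> S" "t = h s" "t \<noteq> \<one>\<^bsub>H\<^esub>" "\<not> involution H t"
      by (auto simp: TN_def T_def)
    have "s \<notin> SI" using SIimg s by blast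
    then show "t \<in> h ` YY" using s by (auto simp: YY_def SN_def SI_def)
  qed
  have TIsub: "TI \<subseteq> h ` SI \<union> h ` XX"
    by (auto simp: TI_def T_def XX_def SI_def SN_def)
  have finSN: "finite SN" "finite SI" using fin by (simp_all add: SN_def SI_def)
  have cTN: "card TN \<le> card YY"
    using TNsub finSN by (metis (no_types, lifting) YY_def card_image_le card_mono finite_imageI finite_subset le_trans mem_Collect_eq subsetI)
  have cTI: "card TI \<le> card SI + card (h ` XX)"
  proof -
    have "card TI \<le> card (h ` SI \<union> h ` XX)"
      using TIsub finSN by (intro card_mono) (auto simp: XX_def)
    also have "\<dots> \<le> card (h ` SI) + card (h ` XX)" by (rule card_Un_le)
    also have "\<dots> \<le> card SI + card (h ` XX)" using finSN card_image_le by auto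
    finally show ?thesis .
  qed
  have cX: "2 * card (h ` XX) \<le> card XX"
  proof (rule fiber_bound[where g = "\<lambda>y. inv\<^bsub>G\<^esub> y"])
    show "finite XX" using finSN by (simp add: XX_def)
    fix x assume x: "x \<in> XX"
    then have xS: "x \<in> S" and xc: "x \<in> carrier G" and ni: "\<not> involution G x"
      and hi: "involution H (h x)" using SG by (auto simp: XX_def SN_def)
    have x1: "x \<noteq> \<one>\<^bsub>G\<^esub>" using one xS by auto
    have ixS: "inv\<^bsub>G\<^esub> x \<in> S" using invS xS by auto
    have sq: "x \<otimes>\<^bsub>G\<^esub> x \<noteq> \<one>\<^bsub>G\<^esub>" using ni x1 involution_iff[OF gG xc] by auto
    have "inv\<^bsub>G\<^esub> x \<otimes>\<^bsub>G\<^esub> inv\<^bsub>G\<^esub> x \<noteq> \<one>\<^bsub>G\<^esub>"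
      using sq xc by (metis G.inv_mult_group G.inv_eq_1_iff G.m_closed)
    then have nii: "\<not> involution G (inv\<^bsub>G\<^esub> x)" using involution_iff[OF gG] xc by auto
    have hsq: "h x \<otimes>\<^bsub>H\<^esub> h x = \<one>\<^bsub>H\<^esub>" using hi involution_iff[OF gH] xc by auto
    have hinv: "h (inv\<^bsub>G\<^esub> x) = h x" using xc hsq
      by (metis H.inv_char hom_closed hom_inv)
    have neq: "inv\<^bsub>G\<^esub> x \<noteq> x" using sq xc by (metis G.r_inv)
    show "inv\<^bsub>G\<^esub> x \<in> XX \<and> inv\<^bsub>G\<^esub> x \<noteq> x \<and> h (inv\<^bsub>G\<^esub> x) = h x"
      using ixS nii hinv hi neq by (auto simp: XX_def SN_def)
  qed
  have cXY: "card XX + card YY \<le> card SN"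
  proof -
    have "card XX + card YY = card (XX \<union> YY)"
      using finSN by (intro card_Un_disjoint[symmetric]) (auto simp: XX_def YY_def)
    also have "\<dots> \<le> card SN" using finSN by (intro card_mono) (auto simp: XX_def YY_def)
    finally show ?thesis .
  qed
  have vl2: "card SN \<le> b" "real (card SI) \<le> real a + (real b - real (card SN)) / 2"
    using vl by (auto simp: val_le_def SI_def SN_def)
  have r1: "real (card TN) \<le> real (card YY)" using cTN by simp
  have r2: "real (card TI) \<le> real (card SI) + real (card (h ` XX))" using cTI by simp
  have r3: "2 * real (card (h ` XX)) \<le> real (card XX)" using cX by simp
  have r4: "real (card XX) + real (card YY) \<le> real (card SN)" using cXY by simp
  have "val_le (card TI, card TN) (a, b)"
  proof -
    have "card TN \<le> b" using vl2 cTN cXY by linarith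
    moreover have "real (card TI) \<le> real a + (real b - real (card TN)) / 2"
      using vl2(2) r1 r2 r3 r4 by (simp add: field_simps)
    ultimately show ?thesis unfolding val_le_def by simp
  qed
  then show ?thesis using cay finT
    by (simp add: sub_valent_cayley_set_def T_def TI_def TN_def)
qed

theorem lemma2p1:
  fixes G (structure) and N :: "'a set" and a b :: nat
  assumes "group G" and "N \<lhd> G"
  shows "(\<forall>S. sub_valent_cayley_set G a b S \<longrightarrow>
            sub_valent_cayley_set (G Mod N) a b ((\<lambda>g. N #> g) ` S - {\<one>\<^bsub>G Mod N\<^esub>}))
       \<and> (sub_valent_group G a b \<longrightarrow> sub_valent_group (G Mod N) a b)"
proof -
  have gh: "group_hom G (G Mod N) (\<lambda>g. N #> g)"
    using assms by (simp add: group_hom_def group_hom_axioms_def normal.factorgroup_is_group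
        normal.r_coset_hom_Mod)
  have su: "(\<lambda>g. N #> g) ` carrier G = carrier (G Mod N)"
    by (auto simp: FactGroup_def RCOSETS_def)
  have 1: "\<forall>S. sub_valent_cayley_set G a b S \<longrightarrow>
            sub_valent_cayley_set (G Mod N) a b ((\<lambda>g. N #> g) ` S - {\<one>\<^bsub>G Mod N\<^esub>})"
    using hom_image_sub_valent[OF gh su] by blast
  then show ?thesis by (auto simp: sub_valent_group_def)
qed

end
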